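(* Let $A\in\mathbb{R}^{n\times n}$ be Hurwitz (all eigenvalues with strictly negative real parts), let $C\in\mathbb{R}^{r\times n}$ be such that $(A,C)$ is observable, and let $P$ be the unique symmetric positive definite solution of $A^TP+PA+C^TC=0$. Let $Q\in\mathbb{R}^{n\times m}$ satisfy $Q^TQ=I_{m\times m}$. Then for every initial state $y(0)\in\mathbb{R}^n$, the solution $y(t)$ of $\dot y=Ay$ satisfies, for all $t\ge 0$, $$Q^Ty(t)\in\mathcal{E}\big(0,\ Q^TP^{-1}Q,\ \|y(0)\|_P\big).$$
   Context: $\|y\|_P=\sqrt{y^TPy}$. For $c\in\mathbb{R}^m$, a symmetric positive semidefinite $\Sigma\in\mathbb{R}^{m\times m}$ and $\rho\ge 0$, $\mathcal{E}(c,\Sigma,\rho)=\{c+\Sigma^{1/2}u: u\in\mathbb{R}^m,\ \|u\|\le\rho\}$ with $\Sigma^{1/2}$ the symmetric positive semidefinite square root. *)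

theory Defs
  imports "HOL-Analysis.Analysis"
begin

text \<open>Complexification of a real square matrix (to speak about its complex eigenvalues).\<close>
definition cmat :: "real^'n^'m \<Rightarrow> complex^'n^'m" where
  "cmat A = (\<chi> i j. complex_of_real (A $ i $ j))"

text \<open>Hurwitz: every (complex) eigenvalue has strictly negative real part.\<close>
definition hurwitz :: "real^'n^'n \<Rightarrow> bool" where
  "hurwitz A \<longleftrightarrow>
     (\<forall>(lam::complex) (v::complex^'n). v \<noteq> 0 \<and> cmat A *v v = lam *s v \<longrightarrow> Re lam < 0)"

text \<open>Observability of (A,C): the observability matrix [C; CA; ...; CA^(n-1)] has full
  column rank n, i.e. its kernel is trivial.\<close>
definition observable :: "real^'n^'n \<Rightarrow> real^'n^'r \<Rightarrow> bool" where
  "observable A C \<longleftrightarrow>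
     (\<forall>x::real^'n. (\<forall>k<CARD('n). C *v (((*v) A ^^ k) x) = 0) \<longrightarrow> x = 0)"

definition sym_mat :: "real^'n^'n \<Rightarrow> bool" where
  "sym_mat S \<longleftrightarrow> transpose S = S"

definition psd_mat :: "real^'n^'n \<Rightarrow> bool" where
  "psd_mat S \<longleftrightarrow> sym_mat S \<and> (\<forall>x. 0 \<le> x \<bullet> (S *v x))"

definition pd_mat :: "real^'n^'n \<Rightarrow> bool" where
  "pd_mat S \<longleftrightarrow> sym_mat S \<and> (\<forall>x. x \<noteq> 0 \<longrightarrow> 0 < x \<bullet> (S *v x))"

text \<open>The symmetric positive semidefinite square root.\<close>
definition mat_sqrt :: "real^'n^'n \<Rightarrow> real^'n^'n" where
  "mat_sqrt S = (THE R. psd_mat R \<and> R ** R = S)"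

text \<open>Weighted norm \<open>\<parallel>y\<parallel>_P = sqrt (y^T P y)\<close>.\<close>
definition wnorm :: "real^'n^'n \<Rightarrow> real^'n \<Rightarrow> real" where
  "wnorm P y = sqrt (y \<bullet> (P *v y))"

text \<open>Ellipsoid E(c, Sigma, rho) = {c + Sigma^(1/2) u : norm u \<le> rho}.\<close>
definition ellipsoid :: "real^'m \<Rightarrow> real^'m^'m \<Rightarrow> real \<Rightarrow> (real^'m) set" where
  "ellipsoid c S rho = {c + mat_sqrt S *v u | u. norm u \<le> rho}"

end

theory Submission
  imports Defs
begin

lemma dot_tr: "(x::real^'n) \<bullet> (A *v y) = (transpose A *v x) \<bullet> y"
  by (simp add: dot_lmul_matrix[symmetric] transpose_matrix_vector)

lemma sym_dot: "sym_mat S \<Longrightarrow> (x::real^'n) \<bullet> (S *v y) = (S *v x) \<bullet> y"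
  by (simp add: dot_tr sym_mat_def)

lemma quad_cs:
  fixes a b c :: real
  assumes h: "\<And>t. 0 \<le> a + 2*b*t + c*t^2"
  shows "b^2 \<le> a*c"
proof (cases "c = 0")
  case True
  show ?thesis
  proof (rule ccontr)
    assume "\<not> ?thesis"
    hence "b \<noteq> 0" using True by auto
    have "0 \<le> a + 2*b*(-(\<bar>a\<bar>+1)/(2*b)) + c*(-(\<bar>a\<bar>+1)/(2*b))^2" by (rule h)
    also have "\<dots> = a - (\<bar>a\<bar>+1)" using \<open>b \<noteq> 0\<close> True by (simp add: field_simps)
    finally show False by linarith
  qed
next
  case False
  have "0 \<le> a + 2*b*(-b/c) + c*(-b/c)^2" by (rule h)
  also have "\<dots> = a - b^2/c" using False by (simp add: field_simps power2_eq_square)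
  finally have "b^2/c \<le> a" by simp
  moreover have "c \<ge> 0"
  proof (rule ccontr)
    assume "\<not> c \<ge> 0"
    hence c: "c < 0" by simp
    define K where "K = \<bar>a\<bar> + 2*\<bar>b\<bar> + 1"
    have K: "K > 0" by (simp add: K_def)
    define t where "t = K / (-c) + 1"
    have "K / (-c) \<ge> 0" using c K by (intro divide_nonneg_pos) auto
    hence t1: "t \<ge> 1" by (simp add: t_def)
    have "-c*t = K - c" using c by (simp add: t_def field_simps)
    hence ct: "-c*t \<ge> K" using c by linarith
    have "-c*t*t \<ge> K * t" using t1 ct by (intro mult_right_mono) auto
    hence e1: "-(c*t^2) \<ge> K*t" by (simp add: power2_eq_square algebra_simps)
    have e2: "K*t = \<bar>a\<bar>*t + 2*\<bar>b\<bar>*t + t" by (simp add: K_def algebra_simps)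
    have e3: "\<bar>a\<bar>*t \<ge> \<bar>a\<bar>" using t1 by (simp add: mult_left_mono[of 1 t "\<bar>a\<bar>", simplified])
    have e4: "2*b*t \<le> 2*\<bar>b\<bar>*t" using t1 by (intro mult_right_mono) auto
    have "0 \<le> a + 2*b*t + c*t^2" by (rule h)
    thus False using e1 e2 e3 e4 t1 by linarith
  qed
  ultimately show ?thesis using False by (simp add: field_simps)
qed

lemma psd_expand:
  assumes "sym_mat S"
  shows "(x + t *\<^sub>R y) \<bullet> (S *v (x + t *\<^sub>R y)) =
     x \<bullet> (S *v x) + 2 * (x \<bullet> (S *v y)) * t + (y \<bullet> (S *v y)) * t^2"
proof -
  have "y \<bullet> (S *v x) = x \<bullet> (S *v y)" using sym_dot[OF assms, of y x] by (simp add: inner_commute)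
  thus ?thesis
    by (simp add: matrix_vector_right_distrib matrix_vector_mult_scaleR inner_add_left
        inner_add_right algebra_simps power2_eq_square)
qed

lemma psd_cs:
  assumes "psd_mat S"
  shows "(x \<bullet> (S *v y))^2 \<le> (x \<bullet> (S *v x)) * (y \<bullet> (S *v y))"
proof (rule quad_cs)
  fix t
  show "0 \<le> x \<bullet> (S *v x) + 2 * (x \<bullet> (S *v y)) * t + (y \<bullet> (S *v y)) * t^2"
    using assms psd_expand[of S x t y] unfolding psd_mat_def by metis
qed

lemma psd_zero:
  assumes "psd_mat S" "x \<bullet> (S *v x) = 0"
  shows "S *v x = 0"
proof -
  have "(x \<bullet> (S *v (S *v x)))^2 \<le> 0" using psd_cs[OF assms(1), of x "S *v x"] assms(2) by simp
  moreover have "x \<bullet> (S *v (S *v x)) = (S *v x) \<bullet> (S *v x)"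
    using assms(1) sym_dot unfolding psd_mat_def by blast
  ultimately show ?thesis by simp
qed


lemma quad_scale: "(c *\<^sub>R (x::real^'n)) \<bullet> (S *v (c *\<^sub>R x)) = c^2 * (x \<bullet> (S *v x))"
  by (simp only: matrix_vector_mult_scaleR inner_scaleR_left inner_scaleR_right) (simp add: power2_eq_square)

lemma cont_quad: "continuous_on A (\<lambda>x::real^'n. x \<bullet> (S *v x))"
proof -
  have "continuous_on A ((*v) S)"
    by (rule linear_continuous_on[OF matrix_vector_mul_bounded_linear])
  thus ?thesis by (intro continuous_on_inner continuous_on_id) auto
qed

lemma sym_max_eig:
  fixes S :: "real^'n^'n"
  assumes sym: "sym_mat S"
  shows "\<exists>v. norm v = 1 \<and> S *v v = (v \<bullet> (S *v v)) *\<^sub>R v \<and>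
           (\<forall>x. x \<bullet> (S *v x) \<le> (v \<bullet> (S *v v)) * (norm x)^2)"
proof -
  have "sphere (0::real^'n) 1 \<noteq> {}" by (simp add: sphere_eq_empty)
  then obtain v where v: "v \<in> sphere 0 1" and vmax: "\<forall>y\<in>sphere 0 1. y \<bullet> (S *v y) \<le> v \<bullet> (S *v v)"
    using continuous_attains_sup[OF compact_sphere _ cont_quad] by blast
  define lam where "lam = v \<bullet> (S *v v)"
  have nv: "norm v = 1" using v by simp
  have bound: "x \<bullet> (S *v x) \<le> lam * (norm x)^2" for x
  proof (cases "x = 0")
    case True thus ?thesis by simp
  next
    case False
    hence "(1/norm x) *\<^sub>R x \<in> sphere 0 1" by simp
    hence "((1/norm x) *\<^sub>R x) \<bullet> (S *v ((1/norm x) *\<^sub>R x)) \<le> lam" using vmax lam_def by blast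
    hence "(1/norm x)^2 * (x \<bullet> (S *v x)) \<le> lam" by (simp only: quad_scale)
    hence "(1/norm x)^2 * (x \<bullet> (S *v x)) * (norm x)^2 \<le> lam * (norm x)^2"
      by (intro mult_right_mono) auto
    thus ?thesis using False by (simp add: field_simps)
  qed
  define w where "w = S *v v - lam *\<^sub>R v"
  have sv: "v \<bullet> (S *v w) = w \<bullet> (S *v v)"
    using sym_dot[OF sym, of v w] by (simp add: inner_commute)
  have "\<And>t. 0 \<le> 0 + 2 * (-(w \<bullet> w)) * t + (lam * (w \<bullet> w) - w \<bullet> (S *v w)) * t^2"
  proof -
    fix t
    have "(v + t *\<^sub>R w) \<bullet> (S *v (v + t *\<^sub>R w)) \<le> lam * (norm (v + t *\<^sub>R w))^2" by (rule bound)
    also have "(norm (v + t *\<^sub>R w))^2 = 1 + 2 * (v \<bullet> w) * t + (w \<bullet> w) * t^2"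
    proof -
      have "(norm (v + t *\<^sub>R w))^2 = (v + t *\<^sub>R w) \<bullet> (v + t *\<^sub>R w)" by (simp only: power2_norm_eq_inner)
      also have "\<dots> = v \<bullet> v + 2 * (v \<bullet> w) * t + (w \<bullet> w) * t^2"
        by (simp add: inner_add_left inner_add_right inner_commute algebra_simps power2_eq_square)
      also have "v \<bullet> v = 1" using nv by (metis power2_norm_eq_inner power_one)
      finally show ?thesis .
    qed
    finally have "v \<bullet> (S *v v) + 2 * (v \<bullet> (S *v w)) * t + (w \<bullet> (S *v w)) * t^2
        \<le> lam * (1 + 2 * (v \<bullet> w) * t + (w \<bullet> w) * t^2)"
      using psd_expand[OF sym, of v t w] by simp
    moreover have "v \<bullet> (S *v w) = w \<bullet> w + lam * (v \<bullet> w)"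
      using sv by (simp add: w_def inner_diff_left inner_commute algebra_simps)
    ultimately show "0 \<le> 0 + 2 * (-(w \<bullet> w)) * t + (lam * (w \<bullet> w) - w \<bullet> (S *v w)) * t^2"
      by (simp add: lam_def algebra_simps)
  qed
  hence "(-(w \<bullet> w))^2 \<le> 0 * (lam * (w \<bullet> w) - w \<bullet> (S *v w))" by (rule quad_cs)
  hence "w = 0" by simp
  hence "S *v v = lam *\<^sub>R v" by (simp add: w_def)
  thus ?thesis using nv bound lam_def by blast
qed

lemma sym_quad_zero:
  fixes S :: "real^'n^'n"
  assumes "sym_mat S" "\<And>x. x \<bullet> (S *v x) = 0"
  shows "S = 0"
proof -
  have "S *v x = 0" for x
  proof -
    have "(x + 1 *\<^sub>R (S *v x)) \<bullet> (S *v (x + 1 *\<^sub>R (S *v x))) = 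
      x \<bullet> (S *v x) + 2 * (x \<bullet> (S *v (S *v x))) * 1 + ((S *v x) \<bullet> (S *v (S *v x))) * 1^2"
      by (rule psd_expand[OF assms(1)])
    hence "x \<bullet> (S *v (S *v x)) = 0" using assms(2) by simp
    moreover have "x \<bullet> (S *v (S *v x)) = (S *v x) \<bullet> (S *v x)" using sym_dot[OF assms(1)] by blast
    ultimately show ?thesis by simp
  qed
  thus ?thesis by (metis matrix_eq matrix_vector_mult_0)
qed


lemma sym_diff: "sym_mat A \<Longrightarrow> sym_mat B \<Longrightarrow> sym_mat (A - B)"
  by (simp add: sym_mat_def transpose_def vec_eq_iff)

lemma sqrt_unique_aux:
  fixes R1 R2 :: "real^'n^'n"
  assumes p1: "psd_mat R1" and p2: "psd_mat R2" and eq: "R1 ** R1 = R2 ** R2"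
  shows "x \<bullet> ((R1 - R2) *v x) \<le> 0"
proof -
  have s1: "sym_mat R1" and s2: "sym_mat R2" using p1 p2 by (auto simp: psd_mat_def)
  obtain v where nv: "norm v = 1" and ev: "(R1 - R2) *v v = (v \<bullet> ((R1 - R2) *v v)) *\<^sub>R v"
    and bd: "\<forall>x. x \<bullet> ((R1 - R2) *v x) \<le> (v \<bullet> ((R1 - R2) *v v)) * (norm x)^2"
    using sym_max_eig[OF sym_diff[OF s1 s2]] by blast
  define lam where "lam = v \<bullet> ((R1 - R2) *v v)"
  define a1 where "a1 = R1 *v v"
  define a2 where "a2 = R2 *v v"
  have vv: "v \<bullet> v = 1" using nv by (metis power2_norm_eq_inner power_one)
  have a12: "a1 = a2 + lam *\<^sub>R v" using ev
    by (simp add: a1_def a2_def lam_def matrix_vector_mult_diff_rdistrib algebra_simps)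
  have "v \<bullet> (R1 *v a1) = v \<bullet> (R2 *v a2)"
    using eq by (simp add: a1_def a2_def matrix_vector_mul_assoc)
  moreover have "v \<bullet> (R1 *v a1) = a1 \<bullet> a1" using sym_dot[OF s1] a1_def by simp
  moreover have "v \<bullet> (R2 *v a2) = a2 \<bullet> a2" using sym_dot[OF s2] a2_def by simp
  ultimately have "a1 \<bullet> a1 = a2 \<bullet> a2" by simp
  hence "lam * (2 * (a2 \<bullet> v) + lam) = 0" using a12 vv
    by (simp add: inner_add_left inner_add_right inner_commute algebra_simps power2_eq_square)
  moreover have "2 * (a2 \<bullet> v) + lam = v \<bullet> a1 + v \<bullet> a2" using a12 vv
    by (simp add: inner_add_right inner_commute)
  ultimately have lz: "lam * (v \<bullet> a1 + v \<bullet> a2) = 0" by simp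
  have "lam = 0"
  proof (rule ccontr)
    assume "lam \<noteq> 0"
    hence "v \<bullet> a1 + v \<bullet> a2 = 0" using lz by simp
    moreover have "v \<bullet> a1 \<ge> 0" "v \<bullet> a2 \<ge> 0" using p1 p2 by (auto simp: psd_mat_def a1_def a2_def)
    ultimately have "v \<bullet> a1 = 0" "v \<bullet> a2 = 0" by linarith+
    hence "a1 = 0" "a2 = 0" using psd_zero[OF p1] psd_zero[OF p2] by (auto simp: a1_def a2_def)
    hence "lam *\<^sub>R v = 0" using a12 by simp
    thus False using \<open>lam \<noteq> 0\<close> nv by simp
  qed
  thus ?thesis using bd lam_def by simp
qed

lemma sqrt_unique:
  fixes R1 R2 :: "real^'n^'n"
  assumes p1: "psd_mat R1" and p2: "psd_mat R2" and eq: "R1 ** R1 = R2 ** R2"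
  shows "R1 = R2"
proof -
  have s1: "sym_mat R1" and s2: "sym_mat R2" using p1 p2 by (auto simp: psd_mat_def)
  have "R1 - R2 = 0"
  proof (rule sym_quad_zero[OF sym_diff[OF s1 s2]])
    fix x
    have "x \<bullet> ((R1 - R2) *v x) \<le> 0" by (rule sqrt_unique_aux[OF p1 p2 eq])
    moreover have "x \<bullet> ((R2 - R1) *v x) \<le> 0" by (rule sqrt_unique_aux[OF p2 p1 eq[symmetric]])
    moreover have "(R2 - R1) *v x = - ((R1 - R2) *v x)"
      by (simp add: matrix_vector_mult_diff_rdistrib)
    ultimately show "x \<bullet> ((R1 - R2) *v x) = 0" by simp
  qed
  thus ?thesis by simp
qed


definition outer :: "real^'n \<Rightarrow> real^'n^'n" where
  "outer v = (\<chi> i j. v$i * v$j)"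

lemma outer_mv: "outer v *v x = (v \<bullet> x) *\<^sub>R v"
  by (simp add: vec_eq_iff outer_def matrix_vector_mult_def inner_vec_def sum_distrib_left
      algebra_simps)

lemma scaleR_mv: "(c *\<^sub>R (A::real^'n^'m)) *v x = c *\<^sub>R (A *v x)"
  by (metis matrix_scaleR_vector_ac matrix_vector_mult_scaleR)

lemma sym_outer: "sym_mat (c *\<^sub>R outer v)"
  by (simp add: sym_mat_def transpose_def outer_def vec_eq_iff mult.commute)

lemma sym_add: "sym_mat A \<Longrightarrow> sym_mat B \<Longrightarrow> sym_mat (A + B)"
  by (simp add: sym_mat_def transpose_def vec_eq_iff)

lemma subspace_null: "subspace {x. (S::real^'n^'m) *v x = 0}"
  by (auto simp: subspace_def matrix_vector_right_distrib matrix_vector_mult_scaleR)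

lemma psd_zero_mat: "psd_mat (0::real^'n^'n)"
  by (simp add: psd_mat_def sym_mat_def transpose_def vec_eq_iff)

lemma sqrt_exists_aux:
  "\<forall>S::real^'n^'n. psd_mat S \<longrightarrow> CARD('n) - dim {x. S *v x = 0} \<le> k \<longrightarrow>
     (\<exists>R. psd_mat R \<and> R ** R = S)"
proof (induction k rule: less_induct)
  case (less k)
  show ?case
  proof (intro allI impI)
    fix S :: "real^'n^'n"
    assume ps: "psd_mat S" and kb: "CARD('n) - dim {x. S *v x = 0} \<le> k"
    have ss: "sym_mat S" using ps by (simp add: psd_mat_def)
    show "\<exists>R. psd_mat R \<and> R ** R = S"
    proof (cases "S = 0")
      case True
      thus ?thesis using psd_zero_mat by (intro exI[of _ 0]) simp
    next
      case False
      obtain v where nv: "norm v = 1" and ev: "S *v v = (v \<bullet> (S *v v)) *\<^sub>R v"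
        and bd: "\<forall>x. x \<bullet> (S *v x) \<le> (v \<bullet> (S *v v)) * (norm x)^2"
        using sym_max_eig[OF ss] by blast
      define lam where "lam = v \<bullet> (S *v v)"
      have vv: "v \<bullet> v = 1" using nv by (metis power2_norm_eq_inner power_one)
      have lam0: "lam \<ge> 0" using ps by (simp add: psd_mat_def lam_def)
      have lampos: "lam > 0"
      proof (rule ccontr)
        assume "\<not> lam > 0"
        hence "lam = 0" using lam0 by simp
        hence "\<forall>x. x \<bullet> (S *v x) = 0" using bd ps lam_def unfolding psd_mat_def
          by (metis mult_zero_left order_antisym)
        hence "S = 0" using sym_quad_zero[OF ss] by blast
        thus False using False by simp
      qed
      have Sv: "S *v v = lam *\<^sub>R v" using ev lam_def by simp
      define S' where "S' = S - lam *\<^sub>R outer v"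
      have S'x: "S' *v x = S *v x - (lam * (v \<bullet> x)) *\<^sub>R v" for x
        by (simp add: S'_def matrix_vector_mult_diff_rdistrib scaleR_mv outer_mv)
      have sS': "sym_mat S'" unfolding S'_def by (rule sym_diff[OF ss sym_outer])
      have qS': "x \<bullet> (S' *v x) \<ge> 0" for x
      proof -
        define c where "c = v \<bullet> x"
        define w where "w = x - c *\<^sub>R v"
        have wv: "w \<bullet> v = 0" using vv by (simp add: w_def c_def inner_diff_left inner_diff_right inner_commute)
        have xe: "x = w + c *\<^sub>R v" by (simp add: w_def)
        have "x \<bullet> (S *v x) = w \<bullet> (S *v w) + 2 * (w \<bullet> (S *v v)) * c + (v \<bullet> (S *v v)) * c^2"
          using psd_expand[OF ss, of w c v] xe by simp
        also have "w \<bullet> (S *v v) = 0" using Sv wv by simp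
        finally have "x \<bullet> (S *v x) = w \<bullet> (S *v w) + lam * c^2" by (simp add: lam_def)
        moreover have "w \<bullet> (S *v w) \<ge> 0" using ps by (simp add: psd_mat_def)
        moreover have "x \<bullet> (S' *v x) = x \<bullet> (S *v x) - lam * c^2"
          by (simp add: S'x c_def inner_diff_right inner_commute power2_eq_square)
        ultimately show ?thesis by simp
      qed
      have pS': "psd_mat S'" using sS' qS' by (simp add: psd_mat_def)
      have S'v: "S' *v v = 0" using Sv vv by (simp add: S'x)
      have sub: "{x. S *v x = 0} \<subset> {x. S' *v x = 0}"
      proof
        show "{x. S *v x = 0} \<subseteq> {x. S' *v x = 0}"
        proof
          fix x assume "x \<in> {x. S *v x = 0}"
          hence Sx: "S *v x = 0" by simp
          have "lam * (v \<bullet> x) = (S *v v) \<bullet> x" using Sv by simp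
          also have "\<dots> = v \<bullet> (S *v x)" using sym_dot[OF ss] by simp
          finally have "lam * (v \<bullet> x) = 0" using Sx by simp
          thus "x \<in> {x. S' *v x = 0}" using Sx by (simp add: S'x)
        qed
        have "S *v v \<noteq> 0" using Sv lampos nv by auto
        thus "{x. S *v x = 0} \<noteq> {x. S' *v x = 0}" using S'v by blast
      qed
      have "dim {x. S *v x = 0} < dim {x. S' *v x = 0}"
        apply (rule dim_psubset)
        using sub by (simp add: span_eq_iff[THEN iffD2, OF subspace_null])
      moreover have "dim {x. S' *v x = 0} \<le> CARD('n)"
        using dim_subset_UNIV[of "{x. S' *v x = 0}"] by (simp add: DIM_cart)
      ultimately have "CARD('n) - dim {x. S' *v x = 0} < k" using kb by linarith
      then obtain R' where pR': "psd_mat R'" and R'2: "R' ** R' = S'"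
        using less.IH pS' by blast
      have sR': "sym_mat R'" using pR' by (simp add: psd_mat_def)
      have R'v: "R' *v v = 0"
      proof -
        have "v \<bullet> (R' *v (R' *v v)) = 0" using R'2 S'v by (simp add: matrix_vector_mul_assoc)
        moreover have "v \<bullet> (R' *v (R' *v v)) = (R' *v v) \<bullet> (R' *v v)" using sym_dot[OF sR'] by blast
        ultimately show ?thesis by simp
      qed
      define R where "R = R' + sqrt lam *\<^sub>R outer v"
      have Rx: "R *v x = R' *v x + (sqrt lam * (v \<bullet> x)) *\<^sub>R v" for x
        by (simp add: R_def matrix_vector_mult_add_rdistrib scaleR_mv outer_mv)
      have pR: "psd_mat R"
        unfolding psd_mat_def
      proof
        show "sym_mat R" unfolding R_def by (rule sym_add[OF sR' sym_outer])
        show "\<forall>x. 0 \<le> x \<bullet> (R *v x)"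
        proof
          fix x
          have "x \<bullet> (R *v x) = x \<bullet> (R' *v x) + sqrt lam * (v \<bullet> x)^2"
            by (simp add: Rx inner_add_right inner_commute power2_eq_square)
          moreover have "x \<bullet> (R' *v x) \<ge> 0" using pR' by (simp add: psd_mat_def)
          ultimately show "0 \<le> x \<bullet> (R *v x)" using lam0 by simp
        qed
      qed
      have "R ** R = S"
      proof (rule matrix_eq[THEN iffD2], intro allI)
        fix x
        have vR'x: "v \<bullet> (R' *v x) = 0" using sym_dot[OF sR', of v x] R'v by simp
        have "(R ** R) *v x = R *v (R *v x)" by (simp add: matrix_vector_mul_assoc)
        also have "\<dots> = R' *v (R' *v x) + (lam * (v \<bullet> x)) *\<^sub>R v"
          using vR'x R'v vv lam0
          by (simp add: Rx matrix_vector_right_distrib matrix_vector_mult_scaleR inner_add_right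
              algebra_simps)
        also have "\<dots> = S *v x"
          using R'2 by (simp add: matrix_vector_mul_assoc S'x)
        finally show "(R ** R) *v x = S *v x" .
      qed
      thus ?thesis using pR by blast
    qed
  qed
qed

lemma mat_sqrt_props:
  assumes "psd_mat (S::real^'n^'n)"
  shows "psd_mat (mat_sqrt S) \<and> mat_sqrt S ** mat_sqrt S = S"
proof -
  obtain R where R: "psd_mat R \<and> R ** R = S" using sqrt_exists_aux assms by blast
  have "\<exists>!R. psd_mat R \<and> R ** R = S"
    using R sqrt_unique by metis
  thus ?thesis unfolding mat_sqrt_def by (rule theI')
qed


lemma matrix_inv_props:
  assumes "invertible (A::real^'n^'n)"
  shows "A ** matrix_inv A = mat 1 \<and> matrix_inv A ** A = mat 1"
  using assms unfolding matrix_inv_def invertible_def by (rule someI_ex)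

lemma invertible_ker: "(\<And>x. (A::real^'n^'n) *v x = 0 \<Longrightarrow> x = 0) \<Longrightarrow> invertible A"
  using invertible_left_inverse matrix_left_invertible_ker by blast

lemma lyap_decr:
  fixes A :: "real^'n^'n" and C :: "real^'n^'r" and P :: "real^'n^'n"
    and y :: "real \<Rightarrow> real^'n"
  assumes sP: "sym_mat P"
    and lyap: "transpose A ** P + P ** A + transpose C ** C = 0"
    and dy: "\<And>t. t \<ge> 0 \<Longrightarrow> (y has_vector_derivative (A *v y t)) (at t within {0..})"
    and t: "t \<ge> 0"
  shows "y t \<bullet> (P *v y t) \<le> y 0 \<bullet> (P *v y 0)"
proof -
  define V where "V s = y s \<bullet> (P *v y s)" for s
  have dV: "(V has_real_derivative (- ((C *v y s) \<bullet> (C *v y s)))) (at s within {0..})"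
    if s: "s \<ge> 0" for s
  proof -
    have d1: "(y has_derivative (\<lambda>h. h *\<^sub>R (A *v y s))) (at s within {0..})"
      using dy[OF s] by (simp add: has_vector_derivative_def)
    have d2: "((\<lambda>x. P *v y x) has_derivative (\<lambda>h. P *v (h *\<^sub>R (A *v y s)))) (at s within {0..})"
      by (rule bounded_linear.has_derivative[OF matrix_vector_mul_bounded_linear d1])
    have d3: "(V has_derivative (\<lambda>h. y s \<bullet> (P *v (h *\<^sub>R (A *v y s))) + (h *\<^sub>R (A *v y s)) \<bullet> (P *v y s)))
       (at s within {0..})"
      unfolding V_def by (rule has_derivative_inner[OF d1 d2])
    have key: "y s \<bullet> (P *v (A *v y s)) + (A *v y s) \<bullet> (P *v y s) = - ((C *v y s) \<bullet> (C *v y s))"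
    proof -
      let ?x = "y s"
      have e1: "(A *v ?x) \<bullet> (P *v ?x) = ?x \<bullet> ((transpose A ** P) *v ?x)"
        by (metis dot_tr inner_commute matrix_vector_mul_assoc)
      have e2: "?x \<bullet> (P *v (A *v ?x)) = ?x \<bullet> ((P ** A) *v ?x)"
        by (simp add: matrix_vector_mul_assoc)
      have e3: "(C *v ?x) \<bullet> (C *v ?x) = ?x \<bullet> ((transpose C ** C) *v ?x)"
        by (metis dot_tr transpose_transpose matrix_vector_mul_assoc)
      have "(transpose A ** P + P ** A + transpose C ** C) *v ?x = 0" using lyap by simp
      hence "(transpose A ** P) *v ?x + (P ** A) *v ?x + (transpose C ** C) *v ?x = 0"
        by (simp add: matrix_vector_mult_add_rdistrib)
      hence "?x \<bullet> ((transpose A ** P) *v ?x + (P ** A) *v ?x + (transpose C ** C) *v ?x) = 0" by simp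
      hence "?x \<bullet> ((transpose A ** P) *v ?x) + ?x \<bullet> ((P ** A) *v ?x) = - (?x \<bullet> ((transpose C ** C) *v ?x))"
        by (simp add: inner_add_right)
      thus ?thesis using e1 e2 e3 by simp
    qed
    have "(V has_derivative (\<lambda>h. h * (- ((C *v y s) \<bullet> (C *v y s))))) (at s within {0..})"
      using d3 key[symmetric]
      by (simp add: matrix_vector_mult_scaleR algebra_simps)
    moreover have "(\<lambda>h. h * (- ((C *v y s) \<bullet> (C *v y s)))) = (*) (- ((C *v y s) \<bullet> (C *v y s)))"
      by (rule ext) (simp add: mult.commute)
    ultimately show ?thesis by (simp add: has_field_derivative_def)
  qed
  show ?thesis
  proof (cases "t = 0")
    case True thus ?thesis by simp
  next
    case False
    have "V t \<le> V 0"
    proof (rule DERIV_nonpos_imp_decreasing_open[OF t])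
      fix x :: real assume x: "0 < x" "x < t"
      have "at x within {0..} = at x"
        using x by (intro at_within_interior) (simp add: interior_real_atLeast)
      thus "\<exists>y. (V has_real_derivative y) (at x) \<and> y \<le> 0"
        using dV[of x] x by (intro exI[of _ "- ((C *v y x) \<bullet> (C *v y x))"]) auto
    next
      show "continuous_on {0..t} V"
      proof (rule continuous_on_subset[of "{0..}"])
        show "continuous_on {0..} V"
          by (rule DERIV_continuous_on[of _ _ "\<lambda>s. - ((C *v y s) \<bullet> (C *v y s))"]) (use dV in auto)
      qed auto
    qed
    thus ?thesis by (simp add: V_def)
  qed
qed


theorem proposition13:
  fixes A :: "real^'n^'n" and C :: "real^'n^'r" and P :: "real^'n^'n"
    and Q :: "real^'m^'n" and y :: "real \<Rightarrow> real^'n"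
  assumes "hurwitz A"
    and "observable A C"
    and "pd_mat P"
    and "transpose A ** P + P ** A + transpose C ** C = 0"
    and "transpose Q ** Q = mat 1"
    and "\<And>t. t \<ge> 0 \<Longrightarrow> (y has_vector_derivative (A *v y t)) (at t within {0..})"
  shows "\<forall>t\<ge>0. transpose Q *v y t
           \<in> ellipsoid 0 (transpose Q ** matrix_inv P ** Q) (wnorm P (y 0))"
proof (intro allI impI)
  fix t :: real assume t: "t \<ge> 0"
  have pdP: "pd_mat P" by fact
  have sP: "sym_mat P" using pdP by (simp add: pd_mat_def)
  have psdP: "psd_mat P" using pdP unfolding pd_mat_def psd_mat_def
    by (metis inner_zero_left order_le_less)
  have invP: "invertible P"
  proof (rule invertible_ker)
    fix x assume "P *v x = 0"
    thus "x = 0" using pdP unfolding pd_mat_def by force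
  qed
  define Pi where "Pi = matrix_inv P"
  have PPi: "P ** Pi = mat 1" and PiP: "Pi ** P = mat 1" using matrix_inv_props[OF invP] Pi_def by auto
  have PPiv: "P *v (Pi *v x) = x" for x using PPi by (simp add: matrix_vector_mul_assoc)
  have sPi: "sym_mat Pi"
  proof -
    have "transpose Pi ** P = mat 1"
      using PPi sP by (metis matrix_transpose_mul sym_mat_def transpose_mat)
    hence "transpose Pi = transpose Pi ** (P ** Pi)" using PPi by simp
    also have "\<dots> = Pi" using \<open>transpose Pi ** P = mat 1\<close> by (simp add: matrix_mul_assoc)
    finally show ?thesis by (simp add: sym_mat_def)
  qed
  have Piq: "a \<bullet> (Pi *v a) = (Pi *v a) \<bullet> (P *v (Pi *v a))" for a
    using PPiv[of a] by (simp add: inner_commute)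
  define S where "S = transpose Q ** matrix_inv P ** Q"
  have Sv: "S *v x = transpose Q *v (Pi *v (Q *v x))" for x
    by (simp add: S_def Pi_def matrix_vector_mul_assoc matrix_mul_assoc)
  have dotQ: "x \<bullet> (transpose Q *v u) = (Q *v x) \<bullet> u" for x u
    by (metis dot_tr transpose_transpose)
  have Sq: "x \<bullet> (S *v x) = (Q *v x) \<bullet> (Pi *v (Q *v x))" for x
    by (simp only: Sv dotQ)
  have QQ: "transpose Q *v (Q *v x) = x" for x
    using assms(5) by (simp add: matrix_vector_mul_assoc)
  have psdS: "psd_mat S"
    unfolding psd_mat_def
  proof
    show "sym_mat S"
      using sPi unfolding S_def Pi_def sym_mat_def
      by (simp add: matrix_transpose_mul transpose_transpose matrix_mul_assoc)
    show "\<forall>x. 0 \<le> x \<bullet> (S *v x)"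
      using Sq Piq psdP unfolding psd_mat_def by simp
  qed
  have invS: "invertible S"
  proof (rule invertible_ker)
    fix x assume Sx: "S *v x = 0"
    define c where "c = Pi *v (Q *v x)"
    have "c \<bullet> (P *v c) = 0" using Sq[of x] Sx Piq[of "Q *v x"] by (simp add: c_def)
    hence "c = 0" using pdP unfolding pd_mat_def by force
    hence "Q *v x = 0" using PPiv[of "Q *v x"] by (simp add: c_def)
    thus "x = 0" using QQ[of x] by simp
  qed
  define z where "z = transpose Q *v y t"
  define w where "w = matrix_inv S *v z"
  have Sw: "S *v w = z" using matrix_inv_props[OF invS] by (simp add: w_def matrix_vector_mul_assoc)
  define R where "R = mat_sqrt S"
  have pR: "psd_mat R" and RR: "R ** R = S" using mat_sqrt_props[OF psdS] R_def by auto
  define u where "u = R *v w"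
  have Ru: "R *v u = z" using RR Sw by (simp add: u_def matrix_vector_mul_assoc)
  have uu: "u \<bullet> u = w \<bullet> z"
  proof -
    have "u \<bullet> u = w \<bullet> (R *v u)" using sym_dot[of R w u] pR by (simp add: psd_mat_def u_def)
    thus ?thesis using Ru by simp
  qed
  define V0 where "V0 = y 0 \<bullet> (P *v y 0)"
  have Vt: "y t \<bullet> (P *v y t) \<le> V0"
    unfolding V0_def by (rule lyap_decr[OF sP assms(4) assms(6) t])
  define c where "c = Pi *v (Q *v w)"
  have wz: "w \<bullet> z = c \<bullet> (P *v y t)"
  proof -
    have "w \<bullet> z = (Q *v w) \<bullet> y t" unfolding z_def by (rule dotQ)
    also have "\<dots> = (P *v c) \<bullet> y t" by (simp add: c_def PPiv)
    also have "\<dots> = c \<bullet> (P *v y t)" using sym_dot[OF sP] by simp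
    finally show ?thesis .
  qed
  have cc: "c \<bullet> (P *v c) = w \<bullet> z"
  proof -
    have "c \<bullet> (P *v c) = w \<bullet> (S *v w)" using Sq[of w] Piq[of "Q *v w"] by (simp add: c_def)
    thus ?thesis using Sw by simp
  qed
  have "(w \<bullet> z)^2 \<le> (w \<bullet> z) * (y t \<bullet> (P *v y t))"
    using psd_cs[OF psdP, of c "y t"] wz cc by simp
  moreover have wz0: "w \<bullet> z \<ge> 0" using uu[symmetric] by simp
  ultimately have "w \<bullet> z \<le> y t \<bullet> (P *v y t)"
    using psdP by (cases "w \<bullet> z = 0") (auto simp: power2_eq_square psd_mat_def)
  hence "(norm u)^2 \<le> V0" using Vt uu by (simp add: power2_norm_eq_inner)
  hence nu: "norm u \<le> wnorm P (y 0)"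
    unfolding wnorm_def V0_def[symmetric] by (simp add: real_le_rsqrt)
  show "transpose Q *v y t \<in> ellipsoid 0 (transpose Q ** matrix_inv P ** Q) (wnorm P (y 0))"
    unfolding ellipsoid_def S_def[symmetric] R_def[symmetric] using Ru nu z_def by (metis (mono_tags, lifting) add_0 mem_Collect_eq)
qed

end
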